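(* Let $\Lambda$ be a finite set of sites with a real symmetric hopping matrix $(t_{x,y})$. If the whole lattice $\Lambda$ is connected by exchange bonds (i.e. the graph on $\Lambda$ whose edges are the exchange bonds is connected), then the Hubbard model with $U=\infty$ and $N_e=|\Lambda|-1$ satisfies the connectivity condition.
   Context: A loop of length $m$ is an ordered set $(x_1,\ldots,x_m)$ of distinct sites with $t_{x_i,x_{i+1}}\ne0$ for $i=1,\ldots,m-1$ and $t_{x_m,x_1}\ne0$. A pair $\{x,y\}$ of distinct sites is an exchange bond if $x$ and $y$ both belong to a common loop of length three or four, and the set $\Lambda\setminus\{x,y\}$ remains connected via nonvanishing $t_{u,v}$ (i.e. the graph on $\Lambda\setminus\{x,y\}$ with edges $\{u,v\}$, $t_{u,v}\ne0$, is connected). Connectivity condition: with $N_e=|\Lambda|-1$, a configuration is a pair $(x,\boldsymbol\sigma)$ with $x\in\Lambda$ (the empty site, "hole") and $\boldsymbol\sigma\in\{\uparrow,\downarrow\}^{\Lambda\setminus\{x\}}$ (each other site singly occupied with spin $\sigma_y$). Two configurations are adjacent if one is obtained from the other by moving the electron at a site $z\ne x$ with $t_{x,z}\ne0$ onto the hole $x$ (keeping its spin), $z$ becoming the new hole. The connectivity condition holds if for each fixed value of $\sum_{y\ne x}\sigma_y$ (with $\uparrow=+\frac12,\downarrow=-\frac12$) the graph of configurations with that value and this adjacency is connected. *)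

theory Defs
  imports Complex_Main
begin

definition hop_connected :: "('a \<Rightarrow> 'a \<Rightarrow> real) \<Rightarrow> 'a set \<Rightarrow> bool" where
  "hop_connected t S \<longleftrightarrow>
     (\<forall>u\<in>S. \<forall>v\<in>S. (\<lambda>a b. a \<in> S \<and> b \<in> S \<and> a \<noteq> b \<and> t a b \<noteq> 0)\<^sup>*\<^sup>* u v)"

definition is_loop :: "'a set \<Rightarrow> ('a \<Rightarrow> 'a \<Rightarrow> real) \<Rightarrow> nat \<Rightarrow> 'a list \<Rightarrow> bool" where
  "is_loop \<Lambda> t m xs \<longleftrightarrow> length xs = m \<and> m \<ge> 1 \<and> distinct xs \<and> set xs \<subseteq> \<Lambda> \<and>
     (\<forall>i. Suc i < m \<longrightarrow> t (xs ! i) (xs ! Suc i) \<noteq> 0) \<and>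
     t (xs ! (m - 1)) (xs ! 0) \<noteq> 0"

definition exchange_bond :: "'a set \<Rightarrow> ('a \<Rightarrow> 'a \<Rightarrow> real) \<Rightarrow> 'a \<Rightarrow> 'a \<Rightarrow> bool" where
  "exchange_bond \<Lambda> t x y \<longleftrightarrow> x \<in> \<Lambda> \<and> y \<in> \<Lambda> \<and> x \<noteq> y \<and>
     (\<exists>xs. (is_loop \<Lambda> t 3 xs \<or> is_loop \<Lambda> t 4 xs) \<and> x \<in> set xs \<and> y \<in> set xs) \<and>
     hop_connected t (\<Lambda> - {x, y})"

definition exchange_connected :: "'a set \<Rightarrow> ('a \<Rightarrow> 'a \<Rightarrow> real) \<Rightarrow> bool" where
  "exchange_connected \<Lambda> t \<longleftrightarrow>
     (\<forall>u\<in>\<Lambda>. \<forall>v\<in>\<Lambda>. (\<lambda>a b. exchange_bond \<Lambda> t a b)\<^sup>*\<^sup>* u v)"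

(* configurations (x, sigma): hole at x, spin sigma y for y in Lambda - {x}
   (True = up, False = down); sigma is normalised to False outside Lambda - {x} *)
definition configs :: "'a set \<Rightarrow> ('a \<times> ('a \<Rightarrow> bool)) set" where
  "configs \<Lambda> = {(x, \<sigma>). x \<in> \<Lambda> \<and> (\<forall>z. z \<notin> \<Lambda> - {x} \<longrightarrow> \<sigma> z = False)}"

definition total_Sz :: "'a set \<Rightarrow> 'a \<times> ('a \<Rightarrow> bool) \<Rightarrow> real" where
  "total_Sz \<Lambda> c = (\<Sum>y\<in>\<Lambda> - {fst c}. if snd c y then 1/2 else - 1/2)"

(* the electron at z (t x z ~= 0) hops onto the hole x, keeping its spin *)
definition hop_move :: "'a set \<Rightarrow> ('a \<Rightarrow> 'a \<Rightarrow> real) \<Rightarrow>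
    'a \<times> ('a \<Rightarrow> bool) \<Rightarrow> 'a \<times> ('a \<Rightarrow> bool) \<Rightarrow> bool" where
  "hop_move \<Lambda> t c c' \<longleftrightarrow> c \<in> configs \<Lambda> \<and>
     (\<exists>z\<in>\<Lambda>. z \<noteq> fst c \<and> t (fst c) z \<noteq> 0 \<and>
        c' = (z, (snd c)(fst c := snd c z, z := False)))"

definition config_adjacent :: "'a set \<Rightarrow> ('a \<Rightarrow> 'a \<Rightarrow> real) \<Rightarrow>
    'a \<times> ('a \<Rightarrow> bool) \<Rightarrow> 'a \<times> ('a \<Rightarrow> bool) \<Rightarrow> bool" where
  "config_adjacent \<Lambda> t c c' \<longleftrightarrow> hop_move \<Lambda> t c c' \<or> hop_move \<Lambda> t c' c"

definition connectivity_condition :: "'a set \<Rightarrow> ('a \<Rightarrow> 'a \<Rightarrow> real) \<Rightarrow> bool" where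
  "connectivity_condition \<Lambda> t \<longleftrightarrow>
     (\<forall>c\<in>configs \<Lambda>. \<forall>c'\<in>configs \<Lambda>. total_Sz \<Lambda> c = total_Sz \<Lambda> c' \<longrightarrow>
        (\<lambda>a b. config_adjacent \<Lambda> t a b \<and> total_Sz \<Lambda> a = total_Sz \<Lambda> c
               \<and> total_Sz \<Lambda> b = total_Sz \<Lambda> c)\<^sup>*\<^sup>* c c')"

end

theory Submission
  imports Defs
begin

definition swp :: "('a \<Rightarrow> bool) \<Rightarrow> 'a \<Rightarrow> 'a \<Rightarrow> ('a \<Rightarrow> bool)" where
  "swp \<sigma> u v = \<sigma>(u := \<sigma> v, v := \<sigma> u)"

lemma swp_comm: "swp \<sigma> u v = swp \<sigma> v u"
  unfolding swp_def by (auto simp: fun_eq_iff)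

lemma hop_adj:
  assumes "(h,\<sigma>) \<in> configs \<Lambda>" "z \<in> \<Lambda>" "z \<noteq> h" "t h z \<noteq> 0"
  shows "config_adjacent \<Lambda> t (h,\<sigma>) (z, \<sigma>(h := \<sigma> z, z := False))"
  using assms by (auto simp: config_adjacent_def hop_move_def)

lemma hop_configs:
  assumes "(h,\<sigma>) \<in> configs \<Lambda>" "z \<in> \<Lambda>" "z \<noteq> h"
  shows "(z, \<sigma>(h := \<sigma> z, z := False)) \<in> configs \<Lambda>"
  using assms by (auto simp: configs_def)

lemma swp_configs:
  assumes "(h,\<sigma>) \<in> configs \<Lambda>" "u \<in> \<Lambda>" "v \<in> \<Lambda>" "u \<noteq> h" "v \<noteq> h"
  shows "(h, swp \<sigma> u v) \<in> configs \<Lambda>"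
  using assms by (auto simp: configs_def swp_def)

lemma Sz_count:
  assumes "finite \<Lambda>"
  shows "total_Sz \<Lambda> (h,\<sigma>) = real (card {y \<in> \<Lambda> - {h}. \<sigma> y}) - real (card (\<Lambda> - {h})) / 2"
proof -
  have "total_Sz \<Lambda> (h,\<sigma>) = (\<Sum>y\<in>\<Lambda> - {h}. (if \<sigma> y then 1 else 0) - 1/2)"
    unfolding total_Sz_def by (intro sum.cong) auto
  also have "\<dots> = (\<Sum>y\<in>\<Lambda> - {h}. (if \<sigma> y then 1 else 0)) - real (card (\<Lambda> - {h})) / 2"
    by (simp add: sum_subtractf)
  also have "(\<Sum>y\<in>\<Lambda> - {h}. (if \<sigma> y then 1 else 0::real)) = real (card {y \<in> \<Lambda> - {h}. \<sigma> y})"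
    using assms by (simp add: sum.If_cases Int_def conj_commute)
  finally show ?thesis .
qed

lemma hop_Sz:
  assumes "finite \<Lambda>" "(h,\<sigma>) \<in> configs \<Lambda>" "z \<in> \<Lambda>" "z \<noteq> h"
  shows "total_Sz \<Lambda> (z, \<sigma>(h := \<sigma> z, z := False)) = total_Sz \<Lambda> (h,\<sigma>)"
proof -
  have hL: "h \<in> \<Lambda>" using assms by (auto simp: configs_def)
  let ?g = "\<lambda>\<tau> y. if \<tau> y then 1/2 else - 1/2 :: real"
  let ?s = "\<sigma>(h := \<sigma> z, z := False)"
  have "total_Sz \<Lambda> (z, ?s) = ?g ?s h + (\<Sum>y\<in>\<Lambda> - {z} - {h}. ?g ?s y)"
    unfolding total_Sz_def using assms hL by (simp add: sum.remove[of _ h])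
  also have "(\<Sum>y\<in>\<Lambda> - {z} - {h}. ?g ?s y) = (\<Sum>y\<in>\<Lambda> - {h} - {z}. ?g \<sigma> y)"
    by (intro sum.cong) auto
  also have "?g ?s h + (\<Sum>y\<in>\<Lambda> - {h} - {z}. ?g \<sigma> y) = total_Sz \<Lambda> (h,\<sigma>)"
    unfolding total_Sz_def using assms hL by (simp add: sum.remove[of _ z])
  finally show ?thesis .
qed

lemma adj_props:
  assumes "finite \<Lambda>" "config_adjacent \<Lambda> t c d"
  shows "c \<in> configs \<Lambda> \<and> d \<in> configs \<Lambda> \<and> total_Sz \<Lambda> c = total_Sz \<Lambda> d"
proof -
  have *: "c \<in> configs \<Lambda> \<and> d \<in> configs \<Lambda> \<and> total_Sz \<Lambda> c = total_Sz \<Lambda> d" if "hop_move \<Lambda> t c d" for c d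
  proof -
    obtain h \<sigma> where c: "c = (h,\<sigma>)" by (cases c)
    from that c obtain z where z: "z \<in> \<Lambda>" "z \<noteq> h" "t h z \<noteq> 0" "d = (z, \<sigma>(h := \<sigma> z, z := False))"
      "(h,\<sigma>) \<in> configs \<Lambda>" by (auto simp: hop_move_def)
    then show ?thesis using c hop_configs hop_Sz assms(1) by metis
  qed
  show ?thesis using assms(2) *[of c d] *[of d c] unfolding config_adjacent_def by auto
qed

lemma reach_props:
  assumes "finite \<Lambda>" "(config_adjacent \<Lambda> t)\<^sup>*\<^sup>* c d" "c \<in> configs \<Lambda>"
  shows "d \<in> configs \<Lambda> \<and> total_Sz \<Lambda> c = total_Sz \<Lambda> d"
  using assms(2,3)
proof (induction rule: rtranclp_induct)
  case base then show ?case by simp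
next
  case (step y z) then show ?case using adj_props[OF assms(1), of t y z] by auto
qed

lemma reach_sym:
  assumes "(config_adjacent \<Lambda> t)\<^sup>*\<^sup>* c d"
  shows "(config_adjacent \<Lambda> t)\<^sup>*\<^sup>* d c"
proof -
  have "symp (config_adjacent \<Lambda> t)" unfolding symp_def config_adjacent_def by auto
  then show ?thesis using assms by (metis symp_rtranclp sympD)
qed


lemma hole_path:
  assumes "(\<lambda>a b. a \<in> S \<and> b \<in> S \<and> a \<noteq> b \<and> t a b \<noteq> 0)\<^sup>*\<^sup>* h h'" "S \<subseteq> \<Lambda>" "(h,\<sigma>) \<in> configs \<Lambda>"
  shows "\<exists>\<tau>. (\<lambda>c d. config_adjacent \<Lambda> t c d \<and> fst c \<in> S \<and> fst d \<in> S)\<^sup>*\<^sup>* (h,\<sigma>) (h',\<tau>) \<and> (h',\<tau>) \<in> configs \<Lambda>"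
  using assms(1)
proof (induction rule: rtranclp_induct)
  case base then show ?case using assms(3) by blast
next
  case (step y z)
  then obtain \<tau> where \<tau>: "(\<lambda>c d. config_adjacent \<Lambda> t c d \<and> fst c \<in> S \<and> fst d \<in> S)\<^sup>*\<^sup>* (h,\<sigma>) (y,\<tau>)" "(y,\<tau>) \<in> configs \<Lambda>" by blast
  have "z \<in> \<Lambda>" using step assms(2) by auto
  then have "config_adjacent \<Lambda> t (y,\<tau>) (z, \<tau>(y := \<tau> z, z := False))" "(z, \<tau>(y := \<tau> z, z := False)) \<in> configs \<Lambda>"
    using hop_adj[OF \<tau>(2)] hop_configs[OF \<tau>(2)] step by auto
  moreover have "(\<lambda>c d. config_adjacent \<Lambda> t c d \<and> fst c \<in> S \<and> fst d \<in> S)\<^sup>*\<^sup>* (h,\<sigma>) (z, \<tau>(y := \<tau> z, z := False))"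
    using \<tau>(1) calculation(1) step(2) by (auto intro: rtranclp.rtrancl_into_rtrancl[where b="(y,\<tau>)"])
  ultimately show ?case by blast
qed

lemma adj_swp:
  assumes "config_adjacent \<Lambda> t (h,\<sigma>) (h',\<sigma>')" "h \<notin> {x,y}" "h' \<notin> {x,y}" "x \<in> \<Lambda>" "y \<in> \<Lambda>"
  shows "config_adjacent \<Lambda> t (h, swp \<sigma> x y) (h', swp \<sigma>' x y)"
proof -
  have *: "hop_move \<Lambda> t (h, swp \<sigma> x y) (h', swp \<sigma>' x y)"
    if "hop_move \<Lambda> t (h,\<sigma>) (h',\<sigma>')" "h \<notin> {x,y}" "h' \<notin> {x,y}" for h \<sigma> h' \<sigma>'
  proof -
    have c: "(h,\<sigma>) \<in> configs \<Lambda>" "h' \<in> \<Lambda>" "h' \<noteq> h" "t h h' \<noteq> 0" "\<sigma>' = \<sigma>(h := \<sigma> h', h' := False)"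
      using that unfolding hop_move_def by auto
    have "(h, swp \<sigma> x y) \<in> configs \<Lambda>" using swp_configs[OF c(1) assms(4,5)] that by auto
    moreover have "swp \<sigma>' x y = (swp \<sigma> x y)(h := swp \<sigma> x y h', h' := False)"
      using c(5) that by (auto simp: swp_def fun_eq_iff)
    ultimately show ?thesis using c unfolding hop_move_def by auto
  qed
  show ?thesis using assms(1) *[of h \<sigma> h' \<sigma>'] *[of h' \<sigma>' h \<sigma>] assms(2,3) unfolding config_adjacent_def by auto
qed

lemma path_swp:
  assumes "(\<lambda>c d. config_adjacent \<Lambda> t c d \<and> fst c \<in> \<Lambda> - {x,y} \<and> fst d \<in> \<Lambda> - {x,y})\<^sup>*\<^sup>* c d"
    "x \<in> \<Lambda>" "y \<in> \<Lambda>"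
  shows "(config_adjacent \<Lambda> t)\<^sup>*\<^sup>* (fst c, swp (snd c) x y) (fst d, swp (snd d) x y)"
  using assms(1)
proof (induction rule: rtranclp_induct)
  case base then show ?case by simp
next
  case (step d e)
  have "config_adjacent \<Lambda> t (fst d, swp (snd d) x y) (fst e, swp (snd e) x y)"
    using adj_swp[of \<Lambda> t "fst d" "snd d" "fst e" "snd e" x y] step(2) assms(2,3) by auto
  then show ?case using step(3) by (auto intro: rtranclp.rtrancl_into_rtrancl)
qed

lemma tri:
  assumes "(w,\<tau>) \<in> configs \<Lambda>" "p \<in> \<Lambda>" "q \<in> \<Lambda>" "w \<noteq> p" "w \<noteq> q" "p \<noteq> q"
    "t w p \<noteq> 0" "t p q \<noteq> 0" "t q w \<noteq> 0"
  shows "(config_adjacent \<Lambda> t)\<^sup>*\<^sup>* (w,\<tau>) (w, swp \<tau> p q)"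
proof -
  have wL: "w \<in> \<Lambda>" and tw: "\<tau> w = False" using assms(1) by (auto simp: configs_def)
  define \<tau>1 where "\<tau>1 = \<tau>(w := \<tau> p, p := False)"
  define \<tau>2 where "\<tau>2 = \<tau>1(p := \<tau>1 q, q := False)"
  define \<tau>3 where "\<tau>3 = \<tau>2(q := \<tau>2 w, w := False)"
  have a1: "config_adjacent \<Lambda> t (w,\<tau>) (p,\<tau>1)" and c1: "(p,\<tau>1) \<in> configs \<Lambda>"
    using hop_adj[OF assms(1), of p t] hop_configs[OF assms(1), of p] assms unfolding \<tau>1_def by auto
  have a2: "config_adjacent \<Lambda> t (p,\<tau>1) (q,\<tau>2)" and c2: "(q,\<tau>2) \<in> configs \<Lambda>"
    using hop_adj[OF c1, of q t] hop_configs[OF c1, of q] assms unfolding \<tau>2_def by auto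
  have a3: "config_adjacent \<Lambda> t (q,\<tau>2) (w,\<tau>3)"
    using hop_adj[OF c2, of w t] wL assms unfolding \<tau>3_def by auto
  have "\<tau>3 = swp \<tau> p q" using assms tw unfolding \<tau>3_def \<tau>2_def \<tau>1_def swp_def by (auto simp: fun_eq_iff)
  then show ?thesis using a1 a2 a3 by (metis rtranclp.rtrancl_refl rtranclp.rtrancl_into_rtrancl)
qed

lemma around4:
  assumes "(w,\<tau>) \<in> configs \<Lambda>" "p \<in> \<Lambda>" "q \<in> \<Lambda>" "r \<in> \<Lambda>" "distinct [w,p,q,r]"
    "t w p \<noteq> 0" "t p q \<noteq> 0" "t q r \<noteq> 0" "t r w \<noteq> 0"
  shows "(config_adjacent \<Lambda> t)\<^sup>*\<^sup>* (w,\<tau>) (w, \<tau>(p := \<tau> q, q := \<tau> r, r := \<tau> p))"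
proof -
  have wL: "w \<in> \<Lambda>" and tw: "\<tau> w = False" using assms(1) by (auto simp: configs_def)
  define \<tau>1 where "\<tau>1 = \<tau>(w := \<tau> p, p := False)"
  define \<tau>2 where "\<tau>2 = \<tau>1(p := \<tau>1 q, q := False)"
  define \<tau>3 where "\<tau>3 = \<tau>2(q := \<tau>2 r, r := False)"
  define \<tau>4 where "\<tau>4 = \<tau>3(r := \<tau>3 w, w := False)"
  have a1: "config_adjacent \<Lambda> t (w,\<tau>) (p,\<tau>1)" and c1: "(p,\<tau>1) \<in> configs \<Lambda>"
    using hop_adj[OF assms(1), of p t] hop_configs[OF assms(1), of p] assms unfolding \<tau>1_def by auto
  have a2: "config_adjacent \<Lambda> t (p,\<tau>1) (q,\<tau>2)" and c2: "(q,\<tau>2) \<in> configs \<Lambda>"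
    using hop_adj[OF c1, of q t] hop_configs[OF c1, of q] assms unfolding \<tau>2_def by auto
  have a3: "config_adjacent \<Lambda> t (q,\<tau>2) (r,\<tau>3)" and c3: "(r,\<tau>3) \<in> configs \<Lambda>"
    using hop_adj[OF c2, of r t] hop_configs[OF c2, of r] assms unfolding \<tau>3_def by auto
  have a4: "config_adjacent \<Lambda> t (r,\<tau>3) (w,\<tau>4)"
    using hop_adj[OF c3, of w t] wL assms unfolding \<tau>4_def by auto
  have "\<tau>4 = \<tau>(p := \<tau> q, q := \<tau> r, r := \<tau> p)" using assms tw unfolding \<tau>4_def \<tau>3_def \<tau>2_def \<tau>1_def by (auto simp: fun_eq_iff)
  then show ?thesis using a1 a2 a3 a4 by (metis rtranclp.rtrancl_refl rtranclp.rtrancl_into_rtrancl)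
qed

lemma quad:
  assumes "(w,\<tau>) \<in> configs \<Lambda>" "p \<in> \<Lambda>" "q \<in> \<Lambda>" "r \<in> \<Lambda>" "distinct [w,p,q,r]"
    "t w p \<noteq> 0" "t p q \<noteq> 0" "t q r \<noteq> 0" "t r w \<noteq> 0"
    "x \<in> {p,q,r}" "y \<in> {p,q,r}"
  shows "(config_adjacent \<Lambda> t)\<^sup>*\<^sup>* (w,\<tau>) (w, swp \<tau> x y)"
proof -
  define \<rho> where "\<rho> = \<tau>(p := \<tau> q, q := \<tau> r, r := \<tau> p)"
  have r1: "(config_adjacent \<Lambda> t)\<^sup>*\<^sup>* (w,\<tau>) (w, \<rho>)" unfolding \<rho>_def by (rule around4[OF assms(1-9)])
  have "(w,\<rho>) \<in> configs \<Lambda>" using assms unfolding \<rho>_def configs_def by auto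
  then have "(config_adjacent \<Lambda> t)\<^sup>*\<^sup>* (w,\<rho>) (w, \<rho>(p := \<rho> q, q := \<rho> r, r := \<rho> p))"
    by (rule around4[OF _ assms(2-9)])
  moreover have "\<rho>(p := \<rho> q, q := \<rho> r, r := \<rho> p) = \<tau>(p := \<tau> r, q := \<tau> p, r := \<tau> q)"
    using assms(5) unfolding \<rho>_def by (auto simp: fun_eq_iff)
  ultimately have r2: "(config_adjacent \<Lambda> t)\<^sup>*\<^sup>* (w,\<tau>) (w, \<tau>(p := \<tau> r, q := \<tau> p, r := \<tau> q))"
    using r1 by auto
  have "swp \<tau> x y = \<tau> \<or> swp \<tau> x y = \<rho> \<or> swp \<tau> x y = \<tau>(p := \<tau> r, q := \<tau> p, r := \<tau> q)"
    using assms(5,10,11) unfolding \<rho>_def swp_def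
    by (cases "\<tau> p"; cases "\<tau> q"; cases "\<tau> r") (auto simp: fun_eq_iff)
  then show ?thesis using r1 r2 by auto
qed


lemma loop3:
  assumes "is_loop \<Lambda> t 3 xs"
  shows "\<exists>a b c. xs = [a,b,c] \<and> a \<in> \<Lambda> \<and> b \<in> \<Lambda> \<and> c \<in> \<Lambda> \<and> distinct [a,b,c] \<and>
     t a b \<noteq> 0 \<and> t b c \<noteq> 0 \<and> t c a \<noteq> 0"
proof -
  have l: "length xs = 3" using assms by (simp add: is_loop_def)
  then obtain a b c where xs: "xs = [a,b,c]" by (auto simp: numeral_3_eq_3 length_Suc_conv)
  have "\<forall>i. Suc i < 3 \<longrightarrow> t (xs ! i) (xs ! Suc i) \<noteq> 0" using assms by (simp add: is_loop_def)
  then have "t a b \<noteq> 0" "t b c \<noteq> 0" using xs by (auto dest: spec[of _ 0] spec[of _ 1])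
  then show ?thesis using assms xs by (auto simp: is_loop_def)
qed

lemma loop4:
  assumes "is_loop \<Lambda> t 4 xs"
  shows "\<exists>a b c d. xs = [a,b,c,d] \<and> a \<in> \<Lambda> \<and> b \<in> \<Lambda> \<and> c \<in> \<Lambda> \<and> d \<in> \<Lambda> \<and> distinct [a,b,c,d] \<and>
     t a b \<noteq> 0 \<and> t b c \<noteq> 0 \<and> t c d \<noteq> 0 \<and> t d a \<noteq> 0"
proof -
  have l: "length xs = 4" using assms by (simp add: is_loop_def)
  then obtain a b c d where xs: "xs = [a,b,c,d]" by (auto simp: numeral_eq_Suc length_Suc_conv)
  have "\<forall>i. Suc i < 4 \<longrightarrow> t (xs ! i) (xs ! Suc i) \<noteq> 0" using assms by (simp add: is_loop_def)
  then have "t a b \<noteq> 0" "t b c \<noteq> 0" "t c d \<noteq> 0" using xs by (auto dest: spec[of _ 0] spec[of _ 1] spec[of _ 2])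
  then show ?thesis using assms xs by (auto simp: is_loop_def)
qed

lemma loop_op:
  assumes "exchange_bond \<Lambda> t x y"
  shows "\<exists>w \<in> \<Lambda> - {x,y}. \<forall>\<tau>. (w,\<tau>) \<in> configs \<Lambda> \<longrightarrow> (config_adjacent \<Lambda> t)\<^sup>*\<^sup>* (w,\<tau>) (w, swp \<tau> x y)"
proof -
  from assms obtain xs where xy: "x \<noteq> y" "x \<in> set xs" "y \<in> set xs" and
    lp: "is_loop \<Lambda> t 3 xs \<or> is_loop \<Lambda> t 4 xs" unfolding exchange_bond_def by blast
  from lp show ?thesis
  proof
    assume "is_loop \<Lambda> t 3 xs"
    then obtain a b c where L: "xs = [a,b,c]" "a \<in> \<Lambda>" "b \<in> \<Lambda>" "c \<in> \<Lambda>" "distinct [a,b,c]"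
      "t a b \<noteq> 0" "t b c \<noteq> 0" "t c a \<noteq> 0" using loop3 by blast
    have sw: "swp \<tau> x y = swp \<tau> p q" if "{x,y} = {p,q}" for \<tau> p q
      using that xy(1) by (metis doubleton_eq_iff swp_comm)
    show ?thesis
    proof (cases "a \<in> {x,y}")
      case False
      then have "{x,y} = {b,c}" using xy L by auto
      then show ?thesis using False L tri[of a _ \<Lambda> b c t] sw by (intro bexI[of _ a]) auto
    next
      case aT: True
      show ?thesis
      proof (cases "b \<in> {x,y}")
        case False
        then have "{x,y} = {c,a}" using xy L by auto
        then show ?thesis using False L tri[of b _ \<Lambda> c a t] sw by (intro bexI[of _ b]) auto
      next
        case True
        then have "{x,y} = {a,b}" "c \<notin> {x,y}" using xy L aT by auto
        then show ?thesis using L tri[of c _ \<Lambda> a b t] sw by (intro bexI[of _ c]) auto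
      qed
    qed
  next
    assume "is_loop \<Lambda> t 4 xs"
    then obtain a b c d where L: "xs = [a,b,c,d]" "a \<in> \<Lambda>" "b \<in> \<Lambda>" "c \<in> \<Lambda>" "d \<in> \<Lambda>" "distinct [a,b,c,d]"
      "t a b \<noteq> 0" "t b c \<noteq> 0" "t c d \<noteq> 0" "t d a \<noteq> 0" using loop4 by blast
    show ?thesis
    proof (cases "a \<in> {x,y}")
      case False
      then show ?thesis using L xy quad[of a _ \<Lambda> b c d t x y] by (intro bexI[of _ a]) auto
    next
      case aT: True
      show ?thesis
      proof (cases "b \<in> {x,y}")
        case False
        then show ?thesis using L xy quad[of b _ \<Lambda> c d a t x y] by (intro bexI[of _ b]) auto
      next
        case bT: True
        show ?thesis
        proof (cases "c \<in> {x,y}")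
          case False
          then show ?thesis using L xy quad[of c _ \<Lambda> d a b t x y] by (intro bexI[of _ c]) auto
        next
          case True
          then have "d \<notin> {x,y}" using aT bT L xy by auto
          then show ?thesis using L xy quad[of d _ \<Lambda> a b c t x y] by (intro bexI[of _ d]) auto
        qed
      qed
    qed
  qed
qed

lemma bond_swap:
  assumes "exchange_bond \<Lambda> t x y" "(h,\<sigma>) \<in> configs \<Lambda>" "h \<notin> {x,y}"
  shows "(config_adjacent \<Lambda> t)\<^sup>*\<^sup>* (h,\<sigma>) (h, swp \<sigma> x y)"
proof -
  obtain w where w: "w \<in> \<Lambda> - {x,y}" "\<And>\<tau>. (w,\<tau>) \<in> configs \<Lambda> \<Longrightarrow> (config_adjacent \<Lambda> t)\<^sup>*\<^sup>* (w,\<tau>) (w, swp \<tau> x y)"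
    using loop_op[OF assms(1)] by blast
  have xyL: "x \<in> \<Lambda>" "y \<in> \<Lambda>" and hc: "hop_connected t (\<Lambda> - {x,y})" using assms(1) by (auto simp: exchange_bond_def)
  have hL: "h \<in> \<Lambda>" using assms(2) by (auto simp: configs_def)
  have "(\<lambda>a b. a \<in> \<Lambda> - {x,y} \<and> b \<in> \<Lambda> - {x,y} \<and> a \<noteq> b \<and> t a b \<noteq> 0)\<^sup>*\<^sup>* h w"
    using hc w(1) hL assms(3) unfolding hop_connected_def by blast
  then obtain \<tau> where \<tau>: "(\<lambda>c d. config_adjacent \<Lambda> t c d \<and> fst c \<in> \<Lambda> - {x,y} \<and> fst d \<in> \<Lambda> - {x,y})\<^sup>*\<^sup>* (h,\<sigma>) (w,\<tau>)"
    "(w,\<tau>) \<in> configs \<Lambda>"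
    using hole_path[of "\<Lambda> - {x,y}" t h w \<Lambda> \<sigma>] assms(2) by blast
  have 1: "(config_adjacent \<Lambda> t)\<^sup>*\<^sup>* (h,\<sigma>) (w,\<tau>)"
    using \<tau>(1) by (rule rtranclp_mono[THEN predicate2D, rotated]) auto
  have 2: "(config_adjacent \<Lambda> t)\<^sup>*\<^sup>* (w, swp \<tau> x y) (h, swp \<sigma> x y)"
    using path_swp[OF \<tau>(1) xyL] reach_sym by fastforce
  show ?thesis using 1 w(2)[OF \<tau>(2)] 2 by (meson rtranclp_trans)
qed




definition Sw :: "'a set \<Rightarrow> ('a \<Rightarrow> 'a \<Rightarrow> real) \<Rightarrow> 'a \<Rightarrow> 'a \<Rightarrow> 'a \<Rightarrow> bool" where
  "Sw \<Lambda> t h u v \<longleftrightarrow> u \<in> \<Lambda> - {h} \<and> v \<in> \<Lambda> - {h} \<and>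
     (\<forall>\<sigma>. (h,\<sigma>) \<in> configs \<Lambda> \<longrightarrow> (config_adjacent \<Lambda> t)\<^sup>*\<^sup>* (h,\<sigma>) (h, swp \<sigma> u v))"

lemma bond_sym: "exchange_bond \<Lambda> t x y \<Longrightarrow> exchange_bond \<Lambda> t y x"
  unfolding exchange_bond_def by (simp only: insert_commute[of y x]) blast

lemma bond_basic: "exchange_bond \<Lambda> t x y \<Longrightarrow> x \<in> \<Lambda> \<and> y \<in> \<Lambda> \<and> x \<noteq> y"
  unfolding exchange_bond_def by blast

lemma Sw_bond: "exchange_bond \<Lambda> t x y \<Longrightarrow> h \<in> \<Lambda> \<Longrightarrow> h \<notin> {x,y} \<Longrightarrow> Sw \<Lambda> t h x y"
  unfolding Sw_def using bond_swap[of \<Lambda> t x y h] bond_basic[of \<Lambda> t x y] by auto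

lemma Sw_sym: "Sw \<Lambda> t h u v \<Longrightarrow> Sw \<Lambda> t h v u"
  unfolding Sw_def by (auto simp: swp_comm)

lemma Sw_trans:
  assumes "Sw \<Lambda> t h u v" "Sw \<Lambda> t h v z" "u \<noteq> v" "v \<noteq> z" "u \<noteq> z"
  shows "Sw \<Lambda> t h u z"
  unfolding Sw_def
proof (intro conjI allI impI)
  show "u \<in> \<Lambda> - {h}" "z \<in> \<Lambda> - {h}" using assms(1,2) by (auto simp: Sw_def)
  fix \<sigma> assume c: "(h,\<sigma>) \<in> configs \<Lambda>"
  have uvz: "u \<in> \<Lambda> - {h}" "v \<in> \<Lambda> - {h}" "z \<in> \<Lambda> - {h}" using assms(1,2) by (auto simp: Sw_def)
  have 1: "(config_adjacent \<Lambda> t)\<^sup>*\<^sup>* (h,\<sigma>) (h, swp \<sigma> u v)" using assms(1) c by (auto simp: Sw_def)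
  have c1: "(h, swp \<sigma> u v) \<in> configs \<Lambda>" using swp_configs[OF c] uvz by auto
  have 2: "(config_adjacent \<Lambda> t)\<^sup>*\<^sup>* (h, swp \<sigma> u v) (h, swp (swp \<sigma> u v) v z)" using assms(2) c1 by (auto simp: Sw_def)
  have c2: "(h, swp (swp \<sigma> u v) v z) \<in> configs \<Lambda>" using swp_configs[OF c1] uvz by auto
  have 3: "(config_adjacent \<Lambda> t)\<^sup>*\<^sup>* (h, swp (swp \<sigma> u v) v z) (h, swp (swp (swp \<sigma> u v) v z) u v)"
    using assms(1) c2 by (auto simp: Sw_def)
  have "swp (swp (swp \<sigma> u v) v z) u v = swp \<sigma> u z" using assms(3-5) by (auto simp: swp_def fun_eq_iff)
  then show "(config_adjacent \<Lambda> t)\<^sup>*\<^sup>* (h,\<sigma>) (h, swp \<sigma> u z)" using 1 2 3 by (metis rtranclp_trans)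
qed

lemma Sw_transfer:
  assumes "t h w \<noteq> 0" "w \<in> \<Lambda>" "w \<noteq> h" "exchange_bond \<Lambda> t h b" "b \<noteq> w"
  shows "Sw \<Lambda> t h w b"
  unfolding Sw_def
proof (intro conjI allI impI)
  have bL: "b \<in> \<Lambda>" "b \<noteq> h" "h \<in> \<Lambda>" using bond_basic[OF assms(4)] by auto
  show "w \<in> \<Lambda> - {h}" "b \<in> \<Lambda> - {h}" using assms bL by auto
  fix \<sigma> assume c: "(h,\<sigma>) \<in> configs \<Lambda>"
  define \<sigma>1 where "\<sigma>1 = \<sigma>(h := \<sigma> w, w := False)"
  have a1: "config_adjacent \<Lambda> t (h,\<sigma>) (w,\<sigma>1)" and c1: "(w,\<sigma>1) \<in> configs \<Lambda>"
    using hop_adj[of h \<sigma> \<Lambda> w t, OF c assms(2,3,1)] hop_configs[OF c assms(2,3)] unfolding \<sigma>1_def by auto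
  have 2: "(config_adjacent \<Lambda> t)\<^sup>*\<^sup>* (w,\<sigma>1) (w, swp \<sigma>1 h b)"
    using bond_swap[OF assms(4) c1] assms by auto
  have c2: "(h, swp \<sigma> w b) \<in> configs \<Lambda>" using swp_configs[OF c assms(2) bL(1) assms(3) bL(2)] .
  have a3: "config_adjacent \<Lambda> t (h, swp \<sigma> w b) (w, (swp \<sigma> w b)(h := swp \<sigma> w b w, w := False))"
    using hop_adj[of h "swp \<sigma> w b" \<Lambda> w t, OF c2 assms(2,3,1)] .
  have hF: "\<sigma> h = False" using c by (auto simp: configs_def)
  have "(swp \<sigma> w b)(h := swp \<sigma> w b w, w := False) = swp \<sigma>1 h b"
    using hF assms bL unfolding \<sigma>1_def swp_def by (auto simp: fun_eq_iff)
  then have 3: "(config_adjacent \<Lambda> t)\<^sup>*\<^sup>* (w, swp \<sigma>1 h b) (h, swp \<sigma> w b)"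
    using a3 reach_sym by (metis r_into_rtranclp)
  show "(config_adjacent \<Lambda> t)\<^sup>*\<^sup>* (h,\<sigma>) (h, swp \<sigma> w b)"
    using a1 2 3 by (meson r_into_rtranclp rtranclp_trans)
qed

lemma bond_hop:
  assumes "exchange_bond \<Lambda> t x y"
  shows "(\<lambda>a b. a \<in> \<Lambda> \<and> b \<in> \<Lambda> \<and> a \<noteq> b \<and> t a b \<noteq> 0)\<^sup>*\<^sup>* x y"
proof -
  let ?P = "(\<lambda>a b. a \<in> \<Lambda> \<and> b \<in> \<Lambda> \<and> a \<noteq> b \<and> t a b \<noteq> 0)"
  from assms obtain xs where xy: "x \<in> set xs" "y \<in> set xs" and
    lp: "is_loop \<Lambda> t 3 xs \<or> is_loop \<Lambda> t 4 xs" unfolding exchange_bond_def by blast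
  have key: "\<exists>a. (\<forall>u\<in>set xs. ?P\<^sup>*\<^sup>* a u \<and> ?P\<^sup>*\<^sup>* u a)"
    using lp
  proof
    assume "is_loop \<Lambda> t 3 xs"
    then obtain a b c where L: "xs = [a,b,c]" "a \<in> \<Lambda>" "b \<in> \<Lambda>" "c \<in> \<Lambda>" "distinct [a,b,c]"
      "t a b \<noteq> 0" "t b c \<noteq> 0" "t c a \<noteq> 0" using loop3 by blast
    have e: "?P\<^sup>*\<^sup>* a b" "?P\<^sup>*\<^sup>* b c" "?P\<^sup>*\<^sup>* c a" using L by (intro r_into_rtranclp; auto)+
    have "?P\<^sup>*\<^sup>* a c" "?P\<^sup>*\<^sup>* b a" using rtranclp_trans[OF e(1) e(2)] rtranclp_trans[OF e(2) e(3)] by auto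
    then show ?thesis using e L(1) by (intro exI[of _ a]) simp
  next
    assume "is_loop \<Lambda> t 4 xs"
    then obtain a b c d where L: "xs = [a,b,c,d]" "a \<in> \<Lambda>" "b \<in> \<Lambda>" "c \<in> \<Lambda>" "d \<in> \<Lambda>" "distinct [a,b,c,d]"
      "t a b \<noteq> 0" "t b c \<noteq> 0" "t c d \<noteq> 0" "t d a \<noteq> 0" using loop4 by blast
    have e: "?P\<^sup>*\<^sup>* a b" "?P\<^sup>*\<^sup>* b c" "?P\<^sup>*\<^sup>* c d" "?P\<^sup>*\<^sup>* d a" using L by (intro r_into_rtranclp; auto)+
    have ac: "?P\<^sup>*\<^sup>* a c" using rtranclp_trans[OF e(1) e(2)] .
    have ca: "?P\<^sup>*\<^sup>* c a" using rtranclp_trans[OF e(3) e(4)] .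
    have "?P\<^sup>*\<^sup>* a d" "?P\<^sup>*\<^sup>* b a" using rtranclp_trans[OF ac e(3)] rtranclp_trans[OF e(2) ca] by auto
    then show ?thesis using e L(1) ac ca by (intro exI[of _ a]) simp
  qed
  then obtain a where "\<forall>u\<in>set xs. ?P\<^sup>*\<^sup>* a u \<and> ?P\<^sup>*\<^sup>* u a" by blast
  then have "?P\<^sup>*\<^sup>* x a" "?P\<^sup>*\<^sup>* a y" using xy by auto
  then show ?thesis by (rule rtranclp_trans)
qed

lemma global_hop:
  assumes "exchange_connected \<Lambda> t" "u \<in> \<Lambda>" "v \<in> \<Lambda>"
  shows "(\<lambda>a b. a \<in> \<Lambda> \<and> b \<in> \<Lambda> \<and> a \<noteq> b \<and> t a b \<noteq> 0)\<^sup>*\<^sup>* u v"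
proof -
  have "(\<lambda>a b. exchange_bond \<Lambda> t a b)\<^sup>*\<^sup>* u v" using assms unfolding exchange_connected_def by blast
  then show ?thesis
  proof (induction rule: rtranclp_induct)
    case (step a b) then show ?case using rtranclp_trans[OF step.IH bond_hop[OF step(2)]] by simp
  qed simp
qed

lemma Sw_all:
  assumes ec: "exchange_connected \<Lambda> t" and hL: "h \<in> \<Lambda>" and u: "u \<in> \<Lambda> - {h}" and v: "v \<in> \<Lambda> - {h}" and "u \<noteq> v"
  shows "Sw \<Lambda> t h u v"
proof -
  let ?P = "(\<lambda>a b. a \<in> \<Lambda> \<and> b \<in> \<Lambda> \<and> a \<noteq> b \<and> t a b \<noteq> 0)"
  have "?P\<^sup>*\<^sup>* h u" using global_hop[OF ec hL] u by auto
  moreover have "h \<noteq> u" using u by auto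
  ultimately obtain w where w: "?P h w" by (blast elim: converse_rtranclpE)
  then have wL: "w \<in> \<Lambda>" "w \<noteq> h" "t h w \<noteq> 0" by auto
  define E where "E = (\<lambda>u v. u \<in> \<Lambda> - {h} \<and> v \<in> \<Lambda> - {h} \<and> u \<noteq> v \<and>
     (exchange_bond \<Lambda> t u v \<or> (u = w \<and> exchange_bond \<Lambda> t h v) \<or> (v = w \<and> exchange_bond \<Lambda> t h u)))"
  have ESw: "Sw \<Lambda> t h a b" if eab: "E a b" for a b
  proof -
    have ab: "a \<in> \<Lambda> - {h}" "b \<in> \<Lambda> - {h}" "a \<noteq> b" using that unfolding E_def by auto
    consider "exchange_bond \<Lambda> t a b" | "a = w" "exchange_bond \<Lambda> t h b" | "b = w" "exchange_bond \<Lambda> t h a"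
      using eab unfolding E_def by blast
    then show ?thesis
    proof cases
      case 1 then show ?thesis using Sw_bond[of \<Lambda> t a b h] ab hL by blast
    next
      case 2 then show ?thesis using Sw_transfer[of t h w \<Lambda> b, OF wL(3,1,2)] ab by blast
    next
      case 3 then show ?thesis using Sw_transfer[of t h w \<Lambda> a, OF wL(3,1,2)] ab Sw_sym by metis
    qed
  qed
  define f where "f = (\<lambda>x. if x = h then w else x)"
  have "(\<lambda>a b. exchange_bond \<Lambda> t a b)\<^sup>*\<^sup>* u v" using ec u v unfolding exchange_connected_def by blast
  then have "E\<^sup>*\<^sup>* (f u) (f v)"
  proof (induction rule: rtranclp_induct)
    case base then show ?case by simp
  next
    case (step a b)
    have "f a = f b \<or> E (f a) (f b)"
      using step(2) bond_sym[of \<Lambda> t a b] wL bond_basic[of \<Lambda> t a b] unfolding E_def f_def by auto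
    then show ?case using step(3) by (auto intro: rtranclp.rtrancl_into_rtrancl)
  qed
  then have Euv: "E\<^sup>*\<^sup>* u v" using u v unfolding f_def by auto
  have "\<forall>z. E\<^sup>*\<^sup>* u z \<longrightarrow> z = u \<or> Sw \<Lambda> t h u z"
  proof (intro allI impI)
    fix z assume "E\<^sup>*\<^sup>* u z"
    then show "z = u \<or> Sw \<Lambda> t h u z"
    proof (induction rule: rtranclp_induct)
      case base then show ?case by simp
    next
      case (step a b)
      have ab: "a \<noteq> b" using step(2) unfolding E_def by auto
      show ?case
      proof (cases "b = u")
        case True then show ?thesis by simp
      next
        case False
        show ?thesis
          using step(3) ESw[OF step(2)] Sw_trans[of \<Lambda> t h u a b] ab False by auto
      qed
    qed
  qed
  then show ?thesis using Euv assms(5) by auto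
qed


lemma fixed_hole:
  assumes ec: "exchange_connected \<Lambda> t" and fin: "finite \<Lambda>" and hL: "h \<in> \<Lambda>"
    and c': "(h,\<sigma>') \<in> configs \<Lambda>"
  shows "(h,\<sigma>) \<in> configs \<Lambda> \<Longrightarrow> card {y \<in> \<Lambda> - {h}. \<sigma> y \<and> \<not> \<sigma>' y} = card {y \<in> \<Lambda> - {h}. \<not> \<sigma> y \<and> \<sigma>' y}
     \<Longrightarrow> (config_adjacent \<Lambda> t)\<^sup>*\<^sup>* (h,\<sigma>) (h,\<sigma>')"
proof (induction "card {y \<in> \<Lambda> - {h}. \<sigma> y \<and> \<not> \<sigma>' y}" arbitrary: \<sigma> rule: less_induct)
  case less
  define A where "A = {y \<in> \<Lambda> - {h}. \<sigma> y \<and> \<not> \<sigma>' y}"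
  define B where "B = {y \<in> \<Lambda> - {h}. \<not> \<sigma> y \<and> \<sigma>' y}"
  have finA: "finite A" "finite B" using fin unfolding A_def B_def by auto
  have cAB: "card A = card B" using less(3) unfolding A_def B_def .
  show ?case
  proof (cases "A = {}")
    case True
    then have "card B = 0" using cAB by simp
    then have "B = {}" using finA by simp
    then have "\<sigma> = \<sigma>'" using True less(2) c' unfolding A_def B_def configs_def by (auto simp: fun_eq_iff)
    then show ?thesis by simp
  next
    case False
    then obtain y where y: "y \<in> A" by blast
    have "card A \<noteq> 0" using finA False by simp
    then have "B \<noteq> {}" using cAB by auto
    then obtain z where z: "z \<in> B" by blast
    have yz: "y \<noteq> z" "y \<in> \<Lambda> - {h}" "z \<in> \<Lambda> - {h}" using y z unfolding A_def B_def by auto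
    define \<sigma>1 where "\<sigma>1 = swp \<sigma> y z"
    have A1: "{x \<in> \<Lambda> - {h}. \<sigma>1 x \<and> \<not> \<sigma>' x} = A - {y}"
      using y z unfolding A_def B_def \<sigma>1_def swp_def by auto
    have B1: "{x \<in> \<Lambda> - {h}. \<not> \<sigma>1 x \<and> \<sigma>' x} = B - {z}"
      using y z unfolding A_def B_def \<sigma>1_def swp_def by auto
    have c1: "(h,\<sigma>1) \<in> configs \<Lambda>" using swp_configs[OF less(2)] yz unfolding \<sigma>1_def by auto
    have lt: "card (A - {y}) < card A" using finA(1) y by (rule card_Diff1_less)
    have eq: "card (A - {y}) = card (B - {z})" using cAB finA y z by simp
    have r1: "(config_adjacent \<Lambda> t)\<^sup>*\<^sup>* (h,\<sigma>1) (h,\<sigma>')"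
      using less(1)[of \<sigma>1] A1 B1 lt eq c1 unfolding A_def by auto
    have "Sw \<Lambda> t h y z" using Sw_all[OF ec hL yz(2,3,1)] .
    then have "(config_adjacent \<Lambda> t)\<^sup>*\<^sup>* (h,\<sigma>) (h,\<sigma>1)" using less(2) unfolding Sw_def \<sigma>1_def by auto
    then show ?thesis using r1 by (rule rtranclp_trans)
  qed
qed

lemma card_AB:
  assumes "finite S" "card {y \<in> S. \<sigma> y} = card {y \<in> S. \<sigma>' y}"
  shows "card {y \<in> S. \<sigma> y \<and> \<not> \<sigma>' y} = card {y \<in> S. \<not> \<sigma> y \<and> \<sigma>' y}"
proof -
  have "{y \<in> S. \<sigma> y} = {y \<in> S. \<sigma> y \<and> \<sigma>' y} \<union> {y \<in> S. \<sigma> y \<and> \<not> \<sigma>' y}" by auto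
  then have 1: "card {y \<in> S. \<sigma> y} = card {y \<in> S. \<sigma> y \<and> \<sigma>' y} + card {y \<in> S. \<sigma> y \<and> \<not> \<sigma>' y}"
    using assms(1) by (simp add: card_Un_disjoint[symmetric] disjoint_iff)
  have "{y \<in> S. \<sigma>' y} = {y \<in> S. \<sigma> y \<and> \<sigma>' y} \<union> {y \<in> S. \<not> \<sigma> y \<and> \<sigma>' y}" by auto
  then have 2: "card {y \<in> S. \<sigma>' y} = card {y \<in> S. \<sigma> y \<and> \<sigma>' y} + card {y \<in> S. \<not> \<sigma> y \<and> \<sigma>' y}"
    using assms(1) by (simp add: card_Un_disjoint[symmetric] disjoint_iff)
  show ?thesis using 1 2 assms(2) by simp
qed

theorem mainTheorem6:
  fixes \<Lambda> :: "'a set" and t :: "'a \<Rightarrow> 'a \<Rightarrow> real"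
  assumes "finite \<Lambda>"
    and "\<And>x y. x \<in> \<Lambda> \<Longrightarrow> y \<in> \<Lambda> \<Longrightarrow> t x y = t y x"
    and "exchange_connected \<Lambda> t"
  shows "connectivity_condition \<Lambda> t"
  unfolding connectivity_condition_def
proof (intro ballI impI)
  fix c c' assume c: "c \<in> configs \<Lambda>" and c': "c' \<in> configs \<Lambda>" and Sz: "total_Sz \<Lambda> c = total_Sz \<Lambda> c'"
  obtain h \<sigma> where hc: "c = (h,\<sigma>)" by (cases c)
  obtain h' \<sigma>' where hc': "c' = (h',\<sigma>')" by (cases c')
  have hL: "h \<in> \<Lambda>" "h' \<in> \<Lambda>" using c c' hc hc' by (auto simp: configs_def)
  have "(\<lambda>a b. a \<in> \<Lambda> \<and> b \<in> \<Lambda> \<and> a \<noteq> b \<and> t a b \<noteq> 0)\<^sup>*\<^sup>* h' h" using global_hop[OF assms(3) hL(2,1)] .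
  then obtain \<tau> where \<tau>: "(\<lambda>c d. config_adjacent \<Lambda> t c d \<and> fst c \<in> \<Lambda> \<and> fst d \<in> \<Lambda>)\<^sup>*\<^sup>* (h',\<sigma>') (h,\<tau>)"
    "(h,\<tau>) \<in> configs \<Lambda>"
    using hole_path[of \<Lambda> t h' h \<Lambda> \<sigma>'] c' hc' by blast
  have r1: "(config_adjacent \<Lambda> t)\<^sup>*\<^sup>* c' (h,\<tau>)"
    using \<tau>(1) unfolding hc' by (rule rtranclp_mono[THEN predicate2D, rotated]) auto
  have Sz2: "total_Sz \<Lambda> (h,\<sigma>) = total_Sz \<Lambda> (h,\<tau>)"
    using reach_props[OF assms(1) r1 c'] Sz hc by simp
  then have "card {y \<in> \<Lambda> - {h}. \<sigma> y} = card {y \<in> \<Lambda> - {h}. \<tau> y}"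
    using Sz_count[OF assms(1)] by simp
  then have r2: "(config_adjacent \<Lambda> t)\<^sup>*\<^sup>* (h,\<sigma>) (h,\<tau>)"
    using fixed_hole[OF assms(3,1) hL(1) \<tau>(2) c[unfolded hc]] card_AB assms(1) by blast
  have r: "(config_adjacent \<Lambda> t)\<^sup>*\<^sup>* c c'" using r2 reach_sym[OF r1] hc by (metis rtranclp_trans)
  have "\<forall>d. (config_adjacent \<Lambda> t)\<^sup>*\<^sup>* c d \<longrightarrow>
     (\<lambda>a b. config_adjacent \<Lambda> t a b \<and> total_Sz \<Lambda> a = total_Sz \<Lambda> c \<and> total_Sz \<Lambda> b = total_Sz \<Lambda> c)\<^sup>*\<^sup>* c d"
  proof (intro allI impI)
    fix d assume "(config_adjacent \<Lambda> t)\<^sup>*\<^sup>* c d"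
    then show "(\<lambda>a b. config_adjacent \<Lambda> t a b \<and> total_Sz \<Lambda> a = total_Sz \<Lambda> c \<and> total_Sz \<Lambda> b = total_Sz \<Lambda> c)\<^sup>*\<^sup>* c d"
    proof (induction rule: rtranclp_induct)
      case base then show ?case by simp
    next
      case (step d e)
      have "total_Sz \<Lambda> c = total_Sz \<Lambda> d" using reach_props[OF assms(1) step(1) c] by simp
      moreover have "total_Sz \<Lambda> d = total_Sz \<Lambda> e" using adj_props[OF assms(1) step(2)] by simp
      ultimately show ?case using step(2,3) by (auto intro: rtranclp.rtrancl_into_rtrancl)
    qed
  qed
  then show "(\<lambda>a b. config_adjacent \<Lambda> t a b \<and> total_Sz \<Lambda> a = total_Sz \<Lambda> c \<and> total_Sz \<Lambda> b = total_Sz \<Lambda> c)\<^sup>*\<^sup>* c c'"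
    using r by blast
qed

end
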